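(* For every $\theta\in\mathbb{R}^p$ and every $i\in\{1,\dots,p\}$, define $\Psi:\mathbb{R}^p\to\mathbb{R}$ by $\Psi(\omega)=\sum_{\mathrm p\in\mathrm P}\prod_{k\in\mathrm p}\omega_k$ (so that $\Psi(\theta\odot\theta)=\|\Phi(\theta)\|_2^2$). Then $$G_{ii}=\frac{\partial\Psi}{\partial\omega_i}(\theta\odot\theta),$$ i.e. $\mathrm{diag}(G)=\nabla_{\theta^2}\|\Phi(\theta)\|_2^2$, the gradient of $\|\Phi(\theta)\|_2^2$ with respect to the vector of squared parameters $\theta^2=\theta\odot\theta$.
   Context: $\mathcal G=(V,E)$ is a finite DAG; input neurons have no incoming edges, output neurons no outgoing edges. $\theta\in\mathbb{R}^p$ consists of one weight $\theta_{u\to v}$ per edge and one bias $b_v$ per non-input neuron $v$. A path $\mathrm p=v_0\to\cdots\to v_d$ ($d\ge0$) follows edges and ends at an output neuron (for $d=0$, $v_0$ is non-input); $\mathrm P$ is the set of paths, $q=|\mathrm P|$. For a path $\mathrm p$, write $k\in\mathrm p$ for the parameter indices of its edges together with the index of $b_{v_0}$ when $v_0$ is not an input neuron. The path-lifting $\Phi:\mathbb{R}^p\to\mathbb{R}^q$ is $\Phi_{\mathrm p}(\theta)=\prod_{k\in\mathrm p}\theta_k$. $G=\partial\Phi(\theta)^\top\partial\Phi(\theta)\in\mathbb{R}^{p\times p}$ with $\partial\Phi(\theta)$ the Jacobian of $\Phi$; $\odot$ is the entrywise product. *)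

theory Defs
  imports "HOL-Analysis.Analysis"
begin

text \<open>A network: vertex set V, edge relation E.  Parameter indices are
  Inl (u,v) for the weight of edge u->v and Inr v for the bias of a
  non-input neuron v.\<close>

type_synonym 'v param = "('v \<times> 'v) + 'v"

definition is_input :: "'v set \<Rightarrow> ('v \<times> 'v) set \<Rightarrow> 'v \<Rightarrow> bool" where
  "is_input V E v \<longleftrightarrow> v \<in> V \<and> (\<nexists>u. (u, v) \<in> E)"

definition is_output :: "'v set \<Rightarrow> ('v \<times> 'v) set \<Rightarrow> 'v \<Rightarrow> bool" where
  "is_output V E v \<longleftrightarrow> v \<in> V \<and> (\<nexists>w. (v, w) \<in> E)"

definition is_dag :: "'v set \<Rightarrow> ('v \<times> 'v) set \<Rightarrow> bool" where
  "is_dag V E \<longleftrightarrow> finite V \<and> E \<subseteq> V \<times> V \<and> acyclic E"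

definition param_idx :: "'v set \<Rightarrow> ('v \<times> 'v) set \<Rightarrow> 'v param set" where
  "param_idx V E = Inl ` E \<union> Inr ` {v \<in> V. \<not> is_input V E v}"

definition is_path :: "'v set \<Rightarrow> ('v \<times> 'v) set \<Rightarrow> 'v list \<Rightarrow> bool" where
  "is_path V E ps \<longleftrightarrow> ps \<noteq> [] \<and> set ps \<subseteq> V
     \<and> (\<forall>j. Suc j < length ps \<longrightarrow> (ps ! j, ps ! Suc j) \<in> E)
     \<and> is_output V E (last ps)
     \<and> (length ps = 1 \<longrightarrow> \<not> is_input V E (hd ps))"

definition paths :: "'v set \<Rightarrow> ('v \<times> 'v) set \<Rightarrow> 'v list set" where
  "paths V E = {ps. is_path V E ps}"

definition path_params :: "'v set \<Rightarrow> ('v \<times> 'v) set \<Rightarrow> 'v list \<Rightarrow> 'v param set" where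
  "path_params V E ps = Inl ` set (zip ps (tl ps))
     \<union> (if is_input V E (hd ps) then {} else {Inr (hd ps)})"

definition Phi :: "'v set \<Rightarrow> ('v \<times> 'v) set \<Rightarrow> ('v param \<Rightarrow> real) \<Rightarrow> 'v list \<Rightarrow> real" where
  "Phi V E \<theta> ps = (\<Prod>k\<in>path_params V E ps. \<theta> k)"

definition jac :: "'v set \<Rightarrow> ('v \<times> 'v) set \<Rightarrow> ('v param \<Rightarrow> real) \<Rightarrow> 'v list \<Rightarrow> 'v param \<Rightarrow> real" where
  "jac V E \<theta> ps i = deriv (\<lambda>t. Phi V E (\<theta>(i := t)) ps) (\<theta> i)"

definition Gmat :: "'v set \<Rightarrow> ('v \<times> 'v) set \<Rightarrow> ('v param \<Rightarrow> real) \<Rightarrow> 'v param \<Rightarrow> 'v param \<Rightarrow> real" where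
  "Gmat V E \<theta> i j = (\<Sum>ps\<in>paths V E. jac V E \<theta> ps i * jac V E \<theta> ps j)"

definition Psi :: "'v set \<Rightarrow> ('v \<times> 'v) set \<Rightarrow> ('v param \<Rightarrow> real) \<Rightarrow> real" where
  "Psi V E \<omega> = (\<Sum>ps\<in>paths V E. \<Prod>k\<in>path_params V E ps. \<omega> k)"

end

theory Submission
  imports Defs
begin

lemma pp_finite: "finite (path_params V E ps)"
  unfolding path_params_def by auto

lemma prod_upd:
  assumes "finite S"
  shows "(\<Prod>k\<in>S. (f(i := t)) k) =
     (if i \<in> S then t * (\<Prod>k\<in>S - {i}. f k) else (\<Prod>k\<in>S. f k))"
proof (cases "i \<in> S")
  case True
  have "(\<Prod>k\<in>S. (f(i := t)) k) = (f(i:=t)) i * (\<Prod>k\<in>S - {i}. (f(i := t)) k)"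
    using prod.remove[OF assms True] by blast
  also have "(\<Prod>k\<in>S - {i}. (f(i := t)) k) = (\<Prod>k\<in>S - {i}. f k)"
    by (rule prod.cong) auto
  finally show ?thesis using True by simp
next
  case False
  then show ?thesis by (auto intro!: prod.cong)
qed

lemma lin_deriv: "((\<lambda>t::real. if b then t * c else d) has_real_derivative (if b then c else 0)) (at x)"
  by (cases b) (auto intro!: derivative_eq_intros)

lemma jac_eq: "jac V E \<theta> ps i =
   (if i \<in> path_params V E ps then (\<Prod>k\<in>path_params V E ps - {i}. \<theta> k) else 0)"
proof -
  have "(\<lambda>t. Phi V E (\<theta>(i := t)) ps) = (\<lambda>t. if i \<in> path_params V E ps
     then t * (\<Prod>k\<in>path_params V E ps - {i}. \<theta> k) else (\<Prod>k\<in>path_params V E ps. \<theta> k))"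
    unfolding Phi_def by (rule ext, rule prod_upd[OF pp_finite])
  then show ?thesis unfolding jac_def using DERIV_imp_deriv[OF lin_deriv] by simp
qed

theorem propositionG1:
  fixes V :: "'v set" and E :: "('v \<times> 'v) set"
    and \<theta> :: "'v param \<Rightarrow> real" and i :: "'v param"
  assumes "is_dag V E"
    and "i \<in> param_idx V E"
  shows "Gmat V E \<theta> i i
         = deriv (\<lambda>t. Psi V E ((\<lambda>k. \<theta> k * \<theta> k)(i := t))) (\<theta> i * \<theta> i)"
proof -
  let ?P = "paths V E"
  let ?pp = "path_params V E"
  let ?w = "\<lambda>k. \<theta> k * \<theta> k"
  have eqf: "(\<lambda>t. Psi V E (?w(i := t))) = (\<lambda>t. \<Sum>ps\<in>?P. if i \<in> ?pp ps
     then t * (\<Prod>k\<in>?pp ps - {i}. ?w k) else (\<Prod>k\<in>?pp ps. ?w k))"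
    unfolding Psi_def by (rule ext, rule sum.cong, simp, rule prod_upd[OF pp_finite])
  have G: "Gmat V E \<theta> i i = (\<Sum>ps\<in>?P. if i \<in> ?pp ps then (\<Prod>k\<in>?pp ps - {i}. ?w k) else 0)"
    unfolding Gmat_def jac_eq by (rule sum.cong) (auto simp: prod.distrib)
  show ?thesis
  proof (cases "finite ?P")
    case True
    have "((\<lambda>t. \<Sum>ps\<in>?P. if i \<in> ?pp ps
     then t * (\<Prod>k\<in>?pp ps - {i}. ?w k) else (\<Prod>k\<in>?pp ps. ?w k)) has_real_derivative
      (\<Sum>ps\<in>?P. if i \<in> ?pp ps then (\<Prod>k\<in>?pp ps - {i}. ?w k) else 0)) (at (\<theta> i * \<theta> i))"
      by (rule DERIV_sum) (rule lin_deriv)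
    then show ?thesis using G eqf DERIV_imp_deriv by metis
  next
    case False
    then show ?thesis using G eqf by simp
  qed
qed

end
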